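(* For all $N,k^*\in\omega$ and every real $\epsilon>0$ there is $M\in\omega$ with the following property. For every FAM $\Xi$ and all sets $A_n\subseteq\omega$ ($n<N$) there is a nonempty finite $u\subseteq\omega$ with $|u|\le M$ and $\min(u)>k^*$ such that \[ \Xi(A_n)-\epsilon<\frac{|A_n\cap u|}{|u|}<\Xi(A_n)+\epsilon\qquad\text{for all }n<N . \]
   Context: A partial FAM (finitely additive measure) is a finitely additive probability measure $\Xi'$ defined on a Boolean subalgebra $\mathcal B$ of $\mathcal P(\omega)$ such that $\{n\}\in\mathcal B$ and $\Xi'(\{n\})=0$ for every $n\in\omega$. A FAM is a partial FAM whose domain is all of $\mathcal P(\omega)$. *)

theory Defs
  imports "HOL-Analysis.Analysis"
begin

definition bool_subalg :: "nat set set \<Rightarrow> bool" where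
  "bool_subalg B \<longleftrightarrow> {} \<in> B \<and> (\<forall>A\<in>B. UNIV - A \<in> B) \<and> (\<forall>A\<in>B. \<forall>C\<in>B. A \<union> C \<in> B)"

text \<open>A partial FAM: a finitely additive probability measure on a Boolean subalgebra B
  containing all singletons, vanishing on singletons. Values outside B are irrelevant.\<close>
definition partial_FAM :: "nat set set \<Rightarrow> (nat set \<Rightarrow> real) \<Rightarrow> bool" where
  "partial_FAM B \<Xi> \<longleftrightarrow> bool_subalg B
     \<and> (\<forall>A\<in>B. 0 \<le> \<Xi> A)
     \<and> \<Xi> UNIV = 1
     \<and> (\<forall>A\<in>B. \<forall>C\<in>B. A \<inter> C = {} \<longrightarrow> \<Xi> (A \<union> C) = \<Xi> A + \<Xi> C)
     \<and> (\<forall>n. {n} \<in> B \<and> \<Xi> {n} = 0)"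

definition FAM :: "(nat set \<Rightarrow> real) \<Rightarrow> bool" where
  "FAM \<Xi> \<longleftrightarrow> partial_FAM UNIV \<Xi>"

end

theory Submission
  imports Defs
begin

lemma fam_props:
  assumes "FAM \<Xi>"
  shows "\<Xi> UNIV = 1" "\<And>A. 0 \<le> \<Xi> A" "\<And>A C. A \<inter> C = {} \<Longrightarrow> \<Xi> (A \<union> C) = \<Xi> A + \<Xi> C"
        "\<And>n. \<Xi> {n} = 0"
  using assms unfolding FAM_def partial_FAM_def by auto

lemma fam_empty: "FAM \<Xi> \<Longrightarrow> \<Xi> {} = 0"
  using fam_props(3)[of \<Xi> "{}" "{}"] by simp

lemma fam_sum:
  assumes "FAM \<Xi>" "finite I" "disjoint_family_on C I"
  shows "\<Xi> (\<Union>i\<in>I. C i) = (\<Sum>i\<in>I. \<Xi> (C i))"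
  using assms(2,3)
proof (induction I rule: finite_induct)
  case empty
  then show ?case using fam_empty[OF assms(1)] by simp
next
  case (insert x F)
  have d: "disjoint_family_on C F"
    using insert.prems disjoint_family_on_mono by blast
  have "C x \<inter> (\<Union>i\<in>F. C i) = {}"
    using insert.prems insert.hyps(2) unfolding disjoint_family_on_def by fastforce
  then have "\<Xi> (\<Union>i\<in>insert x F. C i) = \<Xi> (C x) + \<Xi> (\<Union>i\<in>F. C i)"
    using fam_props(3)[OF assms(1)] by simp
  then show ?case using insert d by simp
qed

lemma fam_finite:
  assumes "FAM \<Xi>" "finite S"
  shows "\<Xi> S = 0"
proof -
  have "S = (\<Union>x\<in>S. {x})" by auto
  moreover have "disjoint_family_on (\<lambda>x. {x}) S" unfolding disjoint_family_on_def by auto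
  ultimately have "\<Xi> S = (\<Sum>x\<in>S. \<Xi> {x})" using fam_sum[OF assms(1) assms(2)] by metis
  then show ?thesis using fam_props(4)[OF assms(1)] by simp
qed

lemma arith_bound:
  fixes q K T S P \<epsilon> :: real
  assumes "q > 0" "K \<ge> 0" "K / q < \<epsilon>" "q \<le> T" "T \<le> q + K"
    "q * P \<le> S" "S \<le> q * P + K" "0 \<le> P" "P \<le> 1"
  shows "P - \<epsilon> < S / T" "S / T < P + \<epsilon>"
proof -
  have T: "T > 0" using assms by linarith
  have K: "K < \<epsilon> * q" using assms(1,3) by (simp add: field_simps)
  have S0: "S \<ge> 0" using assms by (meson mult_nonneg_nonneg order_trans less_imp_le)
  have "S / T \<le> S / q" using S0 assms(1,4) by (simp add: frac_le)
  also have "S / q \<le> P + K / q" using assms(1,7) by (simp add: field_simps)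
  finally show "S / T < P + \<epsilon>" using assms(3) by linarith
  have "(P - \<epsilon>) * T < S"
  proof -
    have "(P - \<epsilon>) * T = P * T - \<epsilon> * T" by (simp add: algebra_simps)
    also have "P * T \<le> P * q + P * K" using assms(5,8) mult_left_mono[of T "q+K" P] by (simp add: algebra_simps)
    also have "P * K \<le> K" using assms(2,9) mult_right_mono[of P 1 K] by simp
    finally have "(P - \<epsilon>) * T \<le> P * q + K - \<epsilon> * T" by linarith
    moreover have "\<epsilon> * q \<le> \<epsilon> * T"
    proof -
      have "0 < \<epsilon> * q" using K assms(2) by linarith
      then have "\<epsilon> > 0" using assms(1) zero_less_mult_pos2 by blast
      then show ?thesis using assms(4) by simp
    qed
    ultimately show ?thesis using K assms(6) by (simp add: algebra_simps)
  qed
  then show "P - \<epsilon> < S / T" using T by (simp add: field_simps)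
qed

theorem lemma1:
  fixes N kstar :: nat and \<epsilon> :: real
  assumes "\<epsilon> > 0"
  shows "\<exists>M::nat. \<forall>\<Xi> (A :: nat \<Rightarrow> nat set). FAM \<Xi> \<longrightarrow>
           (\<exists>u. finite u \<and> u \<noteq> {} \<and> card u \<le> M \<and> Min u > kstar \<and>
              (\<forall>n<N. \<Xi> (A n) - \<epsilon> < real (card (A n \<inter> u)) / real (card u) \<and>
                     real (card (A n \<inter> u)) / real (card u) < \<Xi> (A n) + \<epsilon>))"
proof -
  define P where "P = Pow {..<N}"
  define K where "K = card P"
  have finP: "finite P" unfolding P_def by simp
  define q where "q = nat \<lceil>real K / \<epsilon>\<rceil> + 1"
  have qpos: "q > 0" unfolding q_def by simp
  have "real K / \<epsilon> < real q" unfolding q_def by linarith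
  then have "real K < \<epsilon> * real q" using assms by (simp add: field_simps)
  then have qK: "real K / real q < \<epsilon>" using qpos by (simp add: field_simps)
  show ?thesis
  proof (rule exI[of _ "q + K"], intro allI impI)
    fix \<Xi> and A :: "nat \<Rightarrow> nat set"
    assume F: "FAM \<Xi>"
    define C where "C G = {x. \<forall>n<N. (x \<in> A n) = (n \<in> G)}" for G
    define p where "p G = \<Xi> (C G)" for G
    define m where "m G = nat \<lceil>real q * p G\<rceil>" for G
    have disj: "disjoint_family_on C P"
      unfolding disjoint_family_on_def
    proof (intro ballI impI)
      fix G H assume GH: "G \<in> P" "H \<in> P" "G \<noteq> H"
      show "C G \<inter> C H = {}"
      proof (rule ccontr)
        assume "C G \<inter> C H \<noteq> {}"
        then obtain x where "x \<in> C G" "x \<in> C H" by blast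
        then have "\<forall>n<N. (n \<in> G) = (n \<in> H)" unfolding C_def by auto
        then have "G = H" using GH(1,2) unfolding P_def by auto
        then show False using GH(3) by simp
      qed
    qed
    have cover: "(\<Union>G\<in>P. C G) = UNIV"
    proof -
      have "x \<in> C {n. n < N \<and> x \<in> A n}" for x unfolding C_def by auto
      moreover have "{n. n < N \<and> x \<in> A n} \<in> P" for x unfolding P_def by auto
      ultimately show ?thesis by blast
    qed
    have An: "A n = (\<Union>G\<in>{G\<in>P. n\<in>G}. C G)" if nN: "n < N" for n
    proof (intro equalityI subsetI)
      fix x assume x: "x \<in> A n"
      define G0 where "G0 = {n. n < N \<and> x \<in> A n}"
      have "x \<in> C G0" unfolding C_def G0_def by auto
      moreover have "G0 \<in> {G\<in>P. n\<in>G}" unfolding P_def G0_def using x nN by auto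
      ultimately show "x \<in> (\<Union>G\<in>{G\<in>P. n\<in>G}. C G)" by (rule UN_I[rotated])
    next
      fix x assume "x \<in> (\<Union>G\<in>{G\<in>P. n\<in>G}. C G)"
      then obtain G where "n \<in> G" "x \<in> C G" by blast
      then show "x \<in> A n" using nN unfolding C_def by blast
    qed
    have p0: "p G \<ge> 0" for G unfolding p_def using fam_props(2)[OF F] .
    have sum1: "(\<Sum>G\<in>P. p G) = 1"
      using fam_sum[OF F finP disj, unfolded cover] fam_props(1)[OF F] unfolding p_def by linarith
    have sumA: "\<Xi> (A n) = (\<Sum>G\<in>{G\<in>P. n\<in>G}. p G)" if "n < N" for n
    proof -
      have "disjoint_family_on C {G\<in>P. n\<in>G}" by (rule disjoint_family_on_mono[OF _ disj]) auto
      moreover have "finite {G\<in>P. n\<in>G}" using finP by simp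
      ultimately show ?thesis using fam_sum[OF F] An[OF that] unfolding p_def by metis
    qed
    have exD: "\<exists>D. D \<subseteq> C G \<inter> {kstar<..} \<and> finite D \<and> card D = m G" for G
    proof (cases "p G = 0")
      case True
      then show ?thesis unfolding m_def by (intro exI[of _ "{}"]) simp
    next
      case False
      have "infinite (C G)" using fam_finite[OF F] False unfolding p_def by blast
      moreover have "C G \<subseteq> (C G \<inter> {kstar<..}) \<union> {..kstar}" by auto
      ultimately have "infinite (C G \<inter> {kstar<..})"
        by (meson finite_Un finite_atMost finite_subset)
      then show ?thesis using infinite_arbitrarily_large by blast
    qed
    then obtain D where D: "\<And>G. D G \<subseteq> C G \<inter> {kstar<..}" "\<And>G. finite (D G)"
      "\<And>G. card (D G) = m G" by metis
    define u where "u = (\<Union>G\<in>P. D G)"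
    have disjD: "disjoint_family_on D S" if "S \<subseteq> P" for S
      unfolding disjoint_family_on_def
    proof (intro ballI impI)
      fix G H assume "G \<in> S" "H \<in> S" "G \<noteq> H"
      then have "C G \<inter> C H = {}" using disj that unfolding disjoint_family_on_def by blast
      then show "D G \<inter> D H = {}" using D(1)[of G] D(1)[of H] by blast
    qed
    have cardS: "card (\<Union>G\<in>S. D G) = (\<Sum>G\<in>S. m G)" if "S \<subseteq> P" for S
    proof -
      have "finite S" using finP that by (rule finite_subset[rotated])
      have "card (\<Union>G\<in>S. D G) = (\<Sum>G\<in>S. card (D G))"
      proof (rule card_UN_disjoint)
        show "finite S" by fact
        show "\<forall>i\<in>S. finite (D i)" using D(2) by blast
        show "\<forall>i\<in>S. \<forall>j\<in>S. i \<noteq> j \<longrightarrow> D i \<inter> D j = {}"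
          using disjD[OF that] unfolding disjoint_family_on_def by blast
      qed
      then show ?thesis using D(3) by simp
    qed
    have cardu: "card u = (\<Sum>G\<in>P. m G)" unfolding u_def using cardS by blast
    have Au: "A n \<inter> u = (\<Union>G\<in>{G\<in>P. n\<in>G}. D G)" if "n < N" for n
    proof
      show "A n \<inter> u \<subseteq> (\<Union>G\<in>{G\<in>P. n\<in>G}. D G)"
      proof
        fix x assume x: "x \<in> A n \<inter> u"
        then obtain G where G: "G \<in> P" "x \<in> D G" unfolding u_def by blast
        then have "x \<in> C G" using D(1) by blast
        then have "n \<in> G" using x that unfolding C_def by auto
        then show "x \<in> (\<Union>G\<in>{G\<in>P. n\<in>G}. D G)" using G by blast
      qed
      show "(\<Union>G\<in>{G\<in>P. n\<in>G}. D G) \<subseteq> A n \<inter> u"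
      proof
        fix x assume "x \<in> (\<Union>G\<in>{G\<in>P. n\<in>G}. D G)"
        then obtain G where G: "G \<in> P" "n \<in> G" "x \<in> D G" by blast
        then have "x \<in> C G" using D(1) by blast
        then have "x \<in> A n" using G(2) that unfolding C_def by auto
        then show "x \<in> A n \<inter> u" using G unfolding u_def by blast
      qed
    qed
    have cardAu: "card (A n \<inter> u) = (\<Sum>G\<in>{G\<in>P. n\<in>G}. m G)" if "n < N" for n
      using Au[OF that] cardS[of "{G\<in>P. n\<in>G}"] by auto
    have mb: "real q * p G \<le> real (m G)" "real (m G) \<le> real q * p G + 1" for G
    proof -
      have nn: "real q * p G \<ge> 0" using p0 by simp
      have "real (m G) = of_int \<lceil>real q * p G\<rceil>" unfolding m_def using nn by simp
      then show "real q * p G \<le> real (m G)" "real (m G) \<le> real q * p G + 1" by linarith+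
    qed
    have sb: "real q * (\<Sum>G\<in>S. p G) \<le> real (\<Sum>G\<in>S. m G)"
      "real (\<Sum>G\<in>S. m G) \<le> real q * (\<Sum>G\<in>S. p G) + real K"
      "(\<Sum>G\<in>S. p G) \<le> 1" "0 \<le> (\<Sum>G\<in>S. p G)" if "S \<subseteq> P" for S
    proof -
      have fS: "finite S" using finP that finite_subset by blast
      show "real q * (\<Sum>G\<in>S. p G) \<le> real (\<Sum>G\<in>S. m G)"
        using sum_mono[of S "\<lambda>G. real q * p G" "\<lambda>G. real (m G)"] mb(1)
        by (simp add: sum_distrib_left)
      have "real (\<Sum>G\<in>S. m G) \<le> (\<Sum>G\<in>S. real q * p G + 1)"
        using sum_mono[of S "\<lambda>G. real (m G)" "\<lambda>G. real q * p G + 1"] mb(2) by simp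
      also have "\<dots> = real q * (\<Sum>G\<in>S. p G) + real (card S)"
        by (simp add: sum.distrib sum_distrib_left)
      also have "real (card S) \<le> real K" unfolding K_def using card_mono[OF finP that] by simp
      finally show "real (\<Sum>G\<in>S. m G) \<le> real q * (\<Sum>G\<in>S. p G) + real K" by simp
      show "(\<Sum>G\<in>S. p G) \<le> 1" using sum_mono2[OF finP that, of p] p0 sum1 by simp
      show "0 \<le> (\<Sum>G\<in>S. p G)" using p0 by (simp add: sum_nonneg)
    qed
    have T: "real q \<le> real (card u)" "real (card u) \<le> real q + real K"
      using sb[of P] sum1 cardu by auto
    have fu: "finite u" unfolding u_def using finP D(2) by simp
    have une: "u \<noteq> {}" using T qpos fu by auto
    have uk: "\<forall>x\<in>u. x > kstar" unfolding u_def using D(1) by fastforce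
    show "\<exists>u. finite u \<and> u \<noteq> {} \<and> card u \<le> q + K \<and> Min u > kstar \<and>
              (\<forall>n<N. \<Xi> (A n) - \<epsilon> < real (card (A n \<inter> u)) / real (card u) \<and>
                     real (card (A n \<inter> u)) / real (card u) < \<Xi> (A n) + \<epsilon>)"
    proof (intro exI[of _ u] conjI allI impI)
      show "finite u" "u \<noteq> {}" by (fact fu, fact une)
      show "card u \<le> q + K" using T(2) by linarith
      show "Min u > kstar" using uk fu une Min_in by blast
      fix n assume n: "n < N"
      have S: "{G\<in>P. n\<in>G} \<subseteq> P" by blast
      note ab = arith_bound[of "real q" "real K" \<epsilon> "real (card u)" "\<Xi> (A n)" "real (card (A n \<inter> u))"]
      show "\<Xi> (A n) - \<epsilon> < real (card (A n \<inter> u)) / real (card u)"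
        "real (card (A n \<inter> u)) / real (card u) < \<Xi> (A n) + \<epsilon>"
        using ab qpos qK T sb[OF S] sumA[OF n] cardAu[OF n] by auto
    qed
  qed
qed

end
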